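(* Let $T$ be a bounded linear operator on a separable infinite-dimensional Banach space $X$. If $T$ admits an ergodic Borel probability measure with full support, then $T$ is hypercyclic and $c(T)=1$.
   Context: $T$ is hypercyclic if some $x\in X$ has dense orbit $\{T^nx:n\in\mathbb N\}$; $HC(T)$ is the set of such $x$. For $x\in X$, $B\subset X$, $\mathcal N_T(x,B)=\{i\in\mathbb N: T^ix\in B\}$; $\overline{\mathrm{dens}}(D)=\limsup_N\frac1N\#(D\cap[1,N])$. $B_R$ is the closed ball of radius $R$ centered at $0$. For hypercyclic $T$, $c(T)=\sup_{R>0}\sup_{x\in HC(T)}\overline{\mathrm{dens}}\,\mathcal N_T(x,B_R)\in[0,1]$. *)

theory Defs
  imports "HOL-Analysis.Analysis" "HOL-Probability.Probability"
begin

definition separable_space_X :: "'a::topological_space itself \<Rightarrow> bool" where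
  "separable_space_X _ \<longleftrightarrow> (\<exists>D::'a set. countable D \<and> closure D = UNIV)"

definition infinite_dimensional :: "'a::real_vector itself \<Rightarrow> bool" where
  "infinite_dimensional _ \<longleftrightarrow> \<not> (\<exists>B::'a set. finite B \<and> span B = UNIV)"

definition HC :: "('a::topological_space \<Rightarrow> 'a) \<Rightarrow> 'a set" where
  "HC T = {x. closure {(T ^^ n) x | n. n \<in> (UNIV::nat set)} = UNIV}"

definition hypercyclic :: "('a::topological_space \<Rightarrow> 'a) \<Rightarrow> bool" where
  "hypercyclic T \<longleftrightarrow> HC T \<noteq> {}"

definition visit_set :: "('a \<Rightarrow> 'a) \<Rightarrow> 'a \<Rightarrow> 'a set \<Rightarrow> nat set" where
  "visit_set T x B = {i. i \<ge> 1 \<and> (T ^^ i) x \<in> B}"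

definition upper_density :: "nat set \<Rightarrow> ereal" where
  "upper_density D = limsup (\<lambda>N. ereal (real (card (D \<inter> {1..N})) / real N))"

definition c_const :: "('a::real_normed_vector \<Rightarrow> 'a) \<Rightarrow> ereal" where
  "c_const T = (SUP R \<in> {R::real. R > 0}. SUP x \<in> HC T. upper_density (visit_set T x (cball 0 R)))"

definition ergodic_full_support_measure ::
  "('a::topological_space \<Rightarrow> 'a) \<Rightarrow> 'a measure \<Rightarrow> bool" where
  "ergodic_full_support_measure T M \<longleftrightarrow>
     sets M = sets borel \<and> prob_space M \<and>
     T \<in> measurable M M \<and>
     (\<forall>A \<in> sets M. measure M (T -` A) = measure M A) \<and>
     (\<forall>A \<in> sets M. T -` A = A \<longrightarrow> measure M A = 0 \<or> measure M A = 1) \<and>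
     (\<forall>U. open U \<and> U \<noteq> {} \<longrightarrow> measure M U > 0)"

end

theory Submission
  imports Defs
begin

lemma erg_basic:
  assumes "ergodic_full_support_measure T M"
  shows "sets M = sets borel" "space M = UNIV" "prob_space M" "T \<in> M \<rightarrow>\<^sub>M M"
    "\<And>A. A \<in> sets M \<Longrightarrow> measure M (T -` A) = measure M A"
    "\<And>A. A \<in> sets M \<Longrightarrow> T -` A = A \<Longrightarrow> measure M A = 0 \<or> measure M A = 1"
    "\<And>U. open U \<Longrightarrow> U \<noteq> {} \<Longrightarrow> measure M U > 0"
  using assms unfolding ergodic_full_support_measure_def
  by (auto dest: sets_eq_imp_space_eq)

lemma pre_sets:
  assumes "f \<in> M \<rightarrow>\<^sub>M M" "space M = UNIV" "A \<in> sets M"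
  shows "f -` A \<in> sets M"
  using measurable_sets[OF assms(1,3)] assms(2) by simp

lemma funpow_meas:
  assumes "f \<in> M \<rightarrow>\<^sub>M M" shows "(f ^^ k) \<in> M \<rightarrow>\<^sub>M M"
proof (induction k)
  case 0 then show ?case by simp
next
  case (Suc k)
  show ?case by (simp only: funpow_Suc_right) (rule measurable_comp[OF assms Suc])
qed

lemma funpow_pres:
  assumes E: "ergodic_full_support_measure T M" and A: "A \<in> sets M"
  shows "measure M ((T ^^ k) -` A) = measure M A"
  using A
proof (induction k arbitrary: A)
  case 0 then show ?case by simp
next
  case (Suc k)
  note b = erg_basic[OF E]
  have "(T ^^ Suc k) -` A = T -` ((T ^^ k) -` A)" by (simp only: funpow_Suc_right vimage_comp)
  moreover have s: "(T ^^ k) -` A \<in> sets M"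
    using pre_sets[OF funpow_meas[OF b(4)] b(2) Suc.prems] .
  ultimately show ?case by (simp only:) (rule trans[OF b(5)[OF s] Suc.IH[OF Suc.prems]])
qed

lemma recur:
  assumes E: "ergodic_full_support_measure T M" and U: "open U" "U \<noteq> {}"
  shows "AE x in M. \<exists>n. (T ^^ n) x \<in> U"
proof -
  note b = erg_basic[OF E]
  interpret prob_space M by (rule b(3))
  have Us: "U \<in> sets M" using b(1) U(1) by simp
  have pre: "\<And>f A. f \<in> M \<rightarrow>\<^sub>M M \<Longrightarrow> A \<in> sets M \<Longrightarrow> f -` A \<in> sets M"
    using pre_sets b(2) by blast
  have TK: "\<And>k. T ^^ k \<in> M \<rightarrow>\<^sub>M M" using funpow_meas b(4) by blast
  define B where "B k = (\<Union>n. (T ^^ (n + k)) -` U)" for k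
  have Bs: "B k \<in> sets M" for k unfolding B_def using pre[OF TK Us] by blast
  have B0: "B 0 = (\<Union>n. (T ^^ n) -` U)" unfolding B_def by simp
  have Bk: "B k = (T ^^ k) -` (B 0)" for k
    unfolding B_def by (auto simp: funpow_add)
  have mB: "measure M (B k) = measure M (B 0)" for k
    using Bk funpow_pres[OF E Bs] by metis
  have TB: "T -` (B k) = B (Suc k)" for k
    unfolding B_def by (auto simp: funpow_Suc_right simp del: funpow.simps)
  have sub: "B k \<subseteq> B 0" for k
    unfolding B_def by (auto simp: add.commute[of _ k])
  define L where "L = (\<Inter>k. B k)"
  have Ls: "L \<in> sets M" unfolding L_def using Bs by blast
  have TL: "T -` L = L"
  proof -
    have "T -` L = (\<Inter>k. B (Suc k))" unfolding L_def vimage_INT TB ..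
    also have "\<dots> = L" unfolding L_def
    proof
      show "(\<Inter>k. B (Suc k)) \<subseteq> (\<Inter>k. B k)"
      proof
        fix x assume x: "x \<in> (\<Inter>k. B (Suc k))"
        show "x \<in> (\<Inter>k. B k)"
        proof
          fix k show "x \<in> B k"
            using x sub[of 1] by (cases k) auto
        qed
      qed
    qed auto
    finally show ?thesis .
  qed
  have null: "AE x in M. x \<in> B 0 \<longrightarrow> x \<in> B k" for k
  proof (rule AE_I')
    have "measure M (B 0 - B k) = 0"
      using finite_measure_Diff[OF Bs Bs sub] mB[of k] by simp
    then show "B 0 - B k \<in> null_sets M"
      using Bs by (simp add: emeasure_eq_measure null_sets_def)
  qed auto
  then have "AE x in M. \<forall>k. x \<in> B 0 \<longrightarrow> x \<in> B k" unfolding AE_all_countable using null by blast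
  then have "AE x in M. x \<in> L \<longleftrightarrow> x \<in> B 0"
    by eventually_elim (auto simp: L_def)
  then have mL: "measure M L = measure M (B 0)"
    using measure_eq_AE Ls Bs by blast
  have "U \<subseteq> B 0" unfolding B0 by (auto intro!: exI[of _ 0])
  then have "measure M U \<le> measure M (B 0)" using Bs by (simp add: finite_measure_mono)
  then have "measure M L > 0" using mL b(7)[OF U] by simp
  then have "measure M L = 1" using b(6)[OF Ls TL] by auto
  then have "AE x in M. x \<in> B 0" using mL AE_prob_1 by simp
  then show ?thesis unfolding B0 by auto
qed

lemma ae_HC:
  fixes T :: "'a::metric_space \<Rightarrow> 'a"
  assumes S: "separable_space_X TYPE('a)" and E: "ergodic_full_support_measure T M"
  shows "AE x in M. x \<in> HC T"
proof -
  obtain D :: "'a set" where D: "countable D" "closure D = UNIV"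
    using S unfolding separable_space_X_def by blast
  have "\<forall>p\<in>D \<times> (UNIV::nat set). AE x in M. \<exists>n. (T ^^ n) x \<in> ball (fst p) (inverse (Suc (snd p)))"
  proof
    fix p :: "'a \<times> nat"
    show "AE x in M. \<exists>n. (T ^^ n) x \<in> ball (fst p) (inverse (Suc (snd p)))"
      by (rule recur[OF E]) auto
  qed
  then have "AE x in M. \<forall>p\<in>D \<times> (UNIV::nat set). \<exists>n. (T ^^ n) x \<in> ball (fst p) (inverse (Suc (snd p)))"
    using AE_ball_countable[where X="D \<times> (UNIV::nat set)" and M=M and P="\<lambda>x p. \<exists>n. (T ^^ n) x \<in> ball (fst p) (inverse (Suc (snd p)))"] D(1) by blast
  then show ?thesis
  proof eventually_elim
    case (elim x)
    have "y \<in> closure {(T ^^ n) x | n. n \<in> (UNIV::nat set)}" for y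
      unfolding closure_approachable
    proof (intro allI impI)
      fix e :: real assume e: "e > 0"
      have "y \<in> closure D" using D(2) by simp
      then obtain d where d: "d \<in> D" "dist d y < e / 2"
        unfolding closure_approachable using e by (meson half_gt_zero)
      obtain k :: nat where k: "inverse (Suc k) < e / 2"
        using reals_Archimedean e by (metis half_gt_zero)
      obtain n where n: "(T ^^ n) x \<in> ball d (inverse (Suc k))"
        using elim d(1) by fastforce
      have "dist ((T ^^ n) x) y < e"
        using n d(2) k dist_triangle[of "(T ^^ n) x" y d]
        by (simp add: dist_commute)
      then show "\<exists>z\<in>{(T ^^ n) x | n. n \<in> (UNIV::nat set)}. dist z y < e" by blast
    qed
    then show ?case unfolding HC_def by auto
  qed
qed

lemma card_sum:
  "real (card (visit_set T x A \<inter> {1..N})) = (\<Sum>i\<in>{1..N}. indicator ((T ^^ i) -` A) x)"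
proof -
  have "(\<Sum>i\<in>{1..N}. indicator ((T ^^ i) -` A) x) = (\<Sum>i\<in>{1..N}. (indicator (visit_set T x A) i :: real))"
    by (rule sum.cong) (auto simp: indicator_def visit_set_def)
  also have "\<dots> = (\<Sum>i\<in>{1..N} \<inter> visit_set T x A. (1::real))"
    by (simp add: sum.inter_restrict indicator_def)
  also have "\<dots> = real (card ({1..N} \<inter> visit_set T x A))" by simp
  finally show ?thesis by (simp add: Int_commute)
qed

lemma dens_exists:
  fixes T :: "'a::metric_space \<Rightarrow> 'a"
  assumes S: "separable_space_X TYPE('a)" and E: "ergodic_full_support_measure T M"
    and A: "A \<in> sets M" and e: "e > 0" and mA: "measure M A \<ge> 1 - e"
  shows "\<exists>x\<in>HC T. upper_density (visit_set T x A) > ereal (1 - 2 * e)"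
proof (rule ccontr)
  assume "\<not> ?thesis"
  then have le: "\<And>x. x \<in> HC T \<Longrightarrow> upper_density (visit_set T x A) \<le> ereal (1 - 2 * e)"
    by (auto simp: not_less)
  note b = erg_basic[OF E]
  interpret prob_space M by (rule b(3))
  have TK: "\<And>k. T ^^ k \<in> M \<rightarrow>\<^sub>M M" using funpow_meas b(4) by blast
  have pres: "(T ^^ i) -` A \<in> sets M" for i using pre_sets[OF TK b(2) A] .
  define F where "F N x = (\<Sum>i\<in>{1..N}. indicator ((T ^^ i) -` A) x) / real N" for N x
  have Fm: "(\<lambda>x. F N x) \<in> borel_measurable M" for N
    unfolding F_def using pres by (intro borel_measurable_divide borel_measurable_sum borel_measurable_indicator) auto
  have Fle: "F N x \<le> 1" for N x
  proof -
    have "(\<Sum>i\<in>{1..N}. indicator ((T ^^ i) -` A) x) \<le> of_nat (card {1..N}) * (1::real)"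
      by (rule sum_bounded_above) (simp add: indicator_def)
    then show ?thesis unfolding F_def by (cases "N = 0") (auto simp: field_simps)
  qed
  have Fge: "F N x \<ge> 0" for N x unfolding F_def by (intro divide_nonneg_nonneg sum_nonneg) auto
  have ud: "upper_density (visit_set T x A) = limsup (\<lambda>N. ereal (F N x))" for x
    unfolding upper_density_def F_def card_sum ..
  have intF: "integral\<^sup>L M (\<lambda>x. 1 - F N x) = 1 - measure M A" if N: "N \<ge> 1" for N
  proof -
    have "integral\<^sup>L M (\<lambda>x. F N x) = (\<Sum>i\<in>{1..N}. integral\<^sup>L M (indicator ((T ^^ i) -` A) :: _ \<Rightarrow> real)) / real N"
      unfolding F_def
    proof (subst integral_divide_zero)
      show "integral\<^sup>L M (\<lambda>x. \<Sum>i = 1..N. indicator ((T ^^ i) -` A) x) / real N =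
        (\<Sum>i = 1..N. integral\<^sup>L M (indicator ((T ^^ i) -` A) :: _ \<Rightarrow> real)) / real N"
        using Bochner_Integration.integral_sum[where I="{1..N}" and M=M and f="\<lambda>i. indicator ((T ^^ i) -` A) :: _ \<Rightarrow> real"]
          integrable_real_indicator[OF pres] by (simp add: emeasure_eq_measure)
    qed
    also have "\<dots> = (\<Sum>i\<in>{1..N}. measure M A) / real N"
      using pres funpow_pres[OF E A] b(2) by simp
    also have "\<dots> = measure M A" using N by simp
    finally have "integral\<^sup>L M (\<lambda>x. F N x) = measure M A" .
    moreover have "integrable M (\<lambda>x. F N x)"
      using Fm Fle Fge by (intro integrable_const_bound[where B=1]) auto
    ultimately show ?thesis by (simp add: prob_space)
  qed
  have nnF: "(\<integral>\<^sup>+ x. ennreal (1 - F N x) \<partial>M) = ennreal (1 - measure M A)" if N: "N \<ge> 1" for N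
  proof -
    have "integrable M (\<lambda>x. 1 - F N x)"
      using Fm Fle Fge by (intro integrable_const_bound[where B=1]) auto
    then show ?thesis using Fle intF[OF N] by (subst nn_integral_eq_integral) auto
  qed
  have lim: "liminf (\<lambda>N. \<integral>\<^sup>+ x. ennreal (1 - F N x) \<partial>M) = ennreal (1 - measure M A)"
  proof (rule lim_imp_Liminf)
    show "((\<lambda>N. \<integral>\<^sup>+ x. ennreal (1 - F N x) \<partial>M) \<longlongrightarrow> ennreal (1 - measure M A)) sequentially"
      using nnF by (intro tendsto_eventually) (auto simp: eventually_at_top_linorder)
  qed simp
  have "AE x in M. ennreal (3 * e / 2) \<le> liminf (\<lambda>N. ennreal (1 - F N x))"
    using ae_HC[OF S E]
  proof eventually_elim
    case (elim x)
    have "limsup (\<lambda>N. ereal (F N x)) < ereal (1 - 3 * e / 2)"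
      using le[OF elim] e ud[of x] by (auto intro: le_less_trans)
    then have "eventually (\<lambda>N. ereal (F N x) < ereal (1 - 3 * e / 2)) sequentially"
      by (rule Limsup_lessD)
    then have "eventually (\<lambda>N. ennreal (3 * e / 2) \<le> ennreal (1 - F N x)) sequentially"
      by eventually_elim (auto intro: ennreal_leI)
    then show ?case by (rule Liminf_bounded)
  qed
  then have "(\<integral>\<^sup>+ x. ennreal (3 * e / 2) \<partial>M) \<le> (\<integral>\<^sup>+ x. liminf (\<lambda>N. ennreal (1 - F N x)) \<partial>M)"
    by (rule nn_integral_mono_AE)
  also have "\<dots> \<le> liminf (\<lambda>N. \<integral>\<^sup>+ x. ennreal (1 - F N x) \<partial>M)"
    by (rule nn_integral_liminf) (use Fm in auto)
  also have "\<dots> \<le> ennreal e" unfolding lim using mA by (intro ennreal_leI) auto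
  finally have "ennreal (3 * e / 2) \<le> ennreal e" by (simp add: emeasure_space_1)
  then show False using e by (simp add: ennreal_le_iff)
qed

theorem theorem1p4:
  fixes T :: "'a::banach \<Rightarrow> 'a" and M :: "'a measure"
  assumes "separable_space_X TYPE('a)"
    and "infinite_dimensional TYPE('a)"
    and "bounded_linear T"
    and "ergodic_full_support_measure T M"
  shows "hypercyclic T \<and> c_const T = 1"
proof -
  note S = assms(1) and E = assms(4)
  note b = erg_basic[OF E]
  interpret prob_space M by (rule b(3))
  have aeHC: "AE x in M. x \<in> HC T" by (rule ae_HC[OF S E])
  have hc: "HC T \<noteq> {}"
  proof
    assume "HC T = {}"
    then have "AE x in M. False" using aeHC by simp
    then show False by simp
  qed
  have ud1: "upper_density D \<le> 1" for D
    unfolding upper_density_def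
  proof (rule Limsup_bounded, rule always_eventually, rule allI)
    fix N :: nat
    have "card (D \<inter> {1..N}) \<le> card {1..N}" by (rule card_mono) auto
    then have "real (card (D \<inter> {1..N})) / real N \<le> 1"
      by (cases "N = 0") (auto simp: field_simps)
    then show "ereal (real (card (D \<inter> {1..N})) / real N) \<le> 1" by simp
  qed
  have le1: "c_const T \<le> 1"
    unfolding c_const_def by (intro SUP_least ud1)
  have ge1: "1 \<le> c_const T"
  proof (rule ereal_le_epsilon2)
    fix eps :: real assume eps: "0 < eps"
    define e where "e = eps / 2"
    have e: "e > 0" using eps e_def by simp
    define C where "C n = cball (0::'a) (real (Suc n))" for n
    have Cs: "range C \<subseteq> sets M" unfolding b(1) C_def by (auto intro!: borel_closed)
    have Ci: "incseq C" unfolding C_def incseq_def by (intro allI impI subset_cball) simp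
    have CU: "(\<Union>n. C n) = UNIV"
    proof -
      have "y \<in> C (nat \<lceil>norm y\<rceil>)" for y :: 'a
      proof -
        have "norm y \<le> real (nat \<lceil>norm y\<rceil>)" by (rule real_nat_ceiling_ge)
        then have "norm y \<le> real (Suc (nat \<lceil>norm y\<rceil>))" by linarith
        then show ?thesis unfolding C_def mem_cball_0 .
      qed
      then show ?thesis by blast
    qed
    have "(\<lambda>n. measure M (C n)) \<longlonglongrightarrow> 1"
      using finite_Lim_measure_incseq[OF Cs Ci] CU b(2) prob_space by simp
    then have "eventually (\<lambda>n. measure M (C n) > 1 - e) sequentially"
      using e by (intro order_tendstoD(1)) auto
    then obtain n where n: "measure M (C n) > 1 - e" by (auto simp: eventually_sequentially)
    obtain x where x: "x \<in> HC T" "upper_density (visit_set T x (C n)) > ereal (1 - 2 * e)"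
      using dens_exists[OF S E _ e less_imp_le[OF n]] Cs by blast
    have "ereal (1 - eps) \<le> c_const T"
      unfolding c_const_def
    proof (rule SUP_upper2[where i="real (Suc n)"])
      show "real (Suc n) \<in> {R. R > 0}" by simp
      show "ereal (1 - eps) \<le> (SUP x\<in>HC T. upper_density (visit_set T x (cball 0 (real (Suc n)))))"
      proof (rule SUP_upper2[OF x(1)])
        have "1 - 2 * e = 1 - eps" unfolding e_def by simp
        then show "ereal (1 - eps) \<le> upper_density (visit_set T x (cball 0 (real (Suc n))))"
          using x(2) unfolding C_def by simp
      qed
    qed
    then have "ereal (1 - eps) + ereal eps \<le> c_const T + ereal eps" by (rule add_right_mono)
    then show "1 \<le> c_const T + ereal eps" by (simp add: one_ereal_def)
  qed
  show ?thesis unfolding hypercyclic_def using hc le1 ge1 by auto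
qed

end
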